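(* Let $[Q,P]$ be a dynamical structure function ($Q$ $p\times p$, $P$ $p\times m$, strictly proper) and assume $[I-Q,\ P]$ has only simple poles and has no common poles and zeros. Let $N(s)=C_2(A_2-sI)^{-1}B_2+I$ be a diagonal $p\times p$ transfer matrix (with minimal realisation where $A_2=\mathrm{diag}[a_1,\ldots,a_k]$, $B_2=\mathrm{diag}[b_1,\ldots,b_k]$, $C_2=\mathrm{diag}[c_1,\ldots,c_k]$ obtained by stacking Gilbert realisations of the diagonal entries, each $a_m$ diagonal). If a zero $\lambda_i$ of $[I-Q,\ P]$ with zero direction $v_i^T$ (i.e. $v_i^T[I-Q(\lambda_i),\ P(\lambda_i)]=0$) is cancelled by cascading $N(s)$ (forming $N(s)[I-Q,\ P]$), then $N[j,j](s)$ has a pole at $\lambda_i$ for every $j$ such that $\mathcal{B}(v_i^T)[j]\neq 0$, where $\mathcal{B}(\cdot)$ maps a matrix/vector to its Boolean (zero/nonzero) pattern. *)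

theory Defs
  imports "HOL-Complex_Analysis.Complex_Analysis" "HOL-Computational_Algebra.Polynomial"
begin

text \<open>Scalar transfer functions are complex functions; all notions (poles, values, zeros)
  are taken through the punctured filter at a point, so values at singular points are irrelevant.\<close>

definition rat_fun :: "(complex \<Rightarrow> complex) \<Rightarrow> bool" where
  "rat_fun f \<longleftrightarrow> (\<exists>pn pd :: complex poly. pd \<noteq> 0 \<and>
      (\<forall>s. poly pd s \<noteq> 0 \<longrightarrow> f s = poly pn s / poly pd s))"

definition strictly_proper :: "(complex \<Rightarrow> complex) \<Rightarrow> bool" where
  "strictly_proper f \<longleftrightarrow> (f \<longlongrightarrow> 0) at_infinity"

definition dyn_struct_fun ::
  "nat \<Rightarrow> nat \<Rightarrow> (nat \<Rightarrow> nat \<Rightarrow> complex \<Rightarrow> complex) \<Rightarrow> (nat \<Rightarrow> nat \<Rightarrow> complex \<Rightarrow> complex) \<Rightarrow> bool" where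
  "dyn_struct_fun p m Q P \<longleftrightarrow>
     (\<forall>i<p. \<forall>j<p. rat_fun (Q i j) \<and> strictly_proper (Q i j)) \<and>
     (\<forall>i<p. Q i i = (\<lambda>s. 0)) \<and>
     (\<forall>i<p. \<forall>j<m. rat_fun (P i j) \<and> strictly_proper (P i j))"

definition IQP :: "nat \<Rightarrow> (nat \<Rightarrow> nat \<Rightarrow> complex \<Rightarrow> complex) \<Rightarrow> (nat \<Rightarrow> nat \<Rightarrow> complex \<Rightarrow> complex)
   \<Rightarrow> nat \<Rightarrow> nat \<Rightarrow> complex \<Rightarrow> complex" where
  "IQP p Q P i c s = (if c < p then (if i = c then 1 else 0) - Q i c s else P i (c - p) s)"

definition tmat_mult :: "nat \<Rightarrow> (nat \<Rightarrow> nat \<Rightarrow> complex \<Rightarrow> complex) \<Rightarrow> (nat \<Rightarrow> nat \<Rightarrow> complex \<Rightarrow> complex)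
   \<Rightarrow> nat \<Rightarrow> nat \<Rightarrow> complex \<Rightarrow> complex" where
  "tmat_mult k A B i j s = (\<Sum>l<k. A i l s * B l j s)"

definition only_simple_poles :: "nat \<Rightarrow> nat \<Rightarrow> (nat \<Rightarrow> nat \<Rightarrow> complex \<Rightarrow> complex) \<Rightarrow> bool" where
  "only_simple_poles r n H \<longleftrightarrow> (\<forall>i<r. \<forall>c<n. \<forall>z. is_pole (H i c) z \<longrightarrow>
      (\<exists>L. ((\<lambda>s. (s - z) * H i c s) \<longlongrightarrow> L) (at z)))"

definition is_tm_pole :: "nat \<Rightarrow> nat \<Rightarrow> (nat \<Rightarrow> nat \<Rightarrow> complex \<Rightarrow> complex) \<Rightarrow> complex \<Rightarrow> bool" where
  "is_tm_pole r n H z \<longleftrightarrow> (\<exists>i<r. \<exists>c<n. is_pole (H i c) z)"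

text \<open>Left (output) zero of an r x n transfer matrix H at z: there is a rational row vector
  w(s), analytic at z with w(z) \<noteq> 0, such that w(s)^T H(s) is analytic at z and vanishes there.
  When H has no pole at z this is exactly: exists v \<noteq> 0 with v^T H(z) = 0.\<close>
definition is_tm_zero :: "nat \<Rightarrow> nat \<Rightarrow> (nat \<Rightarrow> nat \<Rightarrow> complex \<Rightarrow> complex) \<Rightarrow> complex \<Rightarrow> bool" where
  "is_tm_zero r n H z \<longleftrightarrow> (\<exists>w :: nat \<Rightarrow> complex \<Rightarrow> complex.
      (\<forall>i<r. rat_fun (w i) \<and> (\<exists>c. (w i \<longlongrightarrow> c) (at z))) \<and>
      (\<exists>i<r. \<not> (w i \<longlongrightarrow> 0) (at z)) \<and>
      (\<forall>c<n. ((\<lambda>s. \<Sum>i<r. w i s * H i c s) \<longlongrightarrow> 0) (at z)))"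

definition bool_pattern :: "(nat \<Rightarrow> complex) \<Rightarrow> nat \<Rightarrow> bool" where
  "bool_pattern v j \<longleftrightarrow> v j \<noteq> 0"

end

theory Submission
  imports Defs
begin

lemma decomp:
  fixes f :: "complex poly"
  assumes "f \<noteq> 0"
  shows "\<exists>q. poly q z \<noteq> 0 \<and> (\<forall>s. poly f s = (s - z) ^ order z f * poly q s)"
proof -
  obtain q where q: "f = [:- z, 1:] ^ order z f * q" "\<not> [:- z, 1:] dvd q"
    using order_decomp[OF assms] by blast
  have "poly q z \<noteq> 0" using q(2) by (simp add: poly_eq_0_iff_dvd)
  moreover have "\<forall>s. poly f s = (s - z) ^ order z f * poly q s"
    by (subst q(1)) (simp add: poly_power)
  ultimately show ?thesis by blast
qed

lemma pole_from_orders: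
  fixes f :: "complex \<Rightarrow> complex" and q r :: "complex poly"
  assumes ev: "eventually (\<lambda>s. f s = (s - z) ^ o1 * poly q s / ((s - z) ^ e * poly r s)) (at z)"
    and q: "poly q z \<noteq> 0" and r: "poly r z \<noteq> 0" and lt: "o1 < e"
  shows "is_pole f z"
proof -
  have ev2: "eventually (\<lambda>s. f s = (poly q s / poly r s) * (1 / (s - z) ^ (e - o1))) (at z)"
  proof -
    have "eventually (\<lambda>s. s \<noteq> z) (at z)" by (simp add: eventually_at_filter)
    with ev show ?thesis
    proof (elim eventually_rev_mp, intro always_eventually allI impI)
      fix s assume sz: "s \<noteq> z" and fs: "f s = (s - z) ^ o1 * poly q s / ((s - z) ^ e * poly r s)"
      have "e = o1 + (e - o1)" using lt by simp
      then have "(s - z) ^ e = (s - z) ^ o1 * (s - z) ^ (e - o1)" by (metis power_add)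
      with fs sz show "f s = (poly q s / poly r s) * (1 / (s - z) ^ (e - o1))"
        by simp
    qed
  qed
  have "((\<lambda>s. poly q s / poly r s) \<longlongrightarrow> poly q z / poly r z) (at z)"
    using r by (intro tendsto_intros) auto
  moreover have "filterlim (\<lambda>s. 1 / (s - z) ^ (e - o1)) at_infinity (at z)"
    using is_pole_inverse_power[of "e - o1" z] lt by (simp add: is_pole_def)
  ultimately have "is_pole (\<lambda>s. (poly q s / poly r s) * (1 / (s - z) ^ (e - o1))) z"
    unfolding is_pole_def using q r
    by (rule_tac c="poly q z / poly r z" in tendsto_mult_filterlim_at_infinity) auto
  then show ?thesis using is_pole_cong[OF ev2 refl] by simp
qed


lemma filterlim_const_minus_at_infinity:
  "filterlim (\<lambda>s::complex. a - s) at_infinity at_infinity"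
proof (subst filterlim_at_infinity[OF order.refl], intro allI impI)
  fix r :: real assume "r > 0"
  show "eventually (\<lambda>s. r \<le> norm (a - s)) at_infinity"
    unfolding eventually_at_infinity
  proof (intro exI[of _ "r + norm a"] allI impI)
    fix s :: complex assume "r + norm a \<le> norm s"
    moreover have "norm s - norm a \<le> norm (s - a)" by (rule norm_triangle_ineq2)
    ultimately show "r \<le> norm (a - s)" by (simp add: norm_minus_commute)
  qed
qed

lemma N_rat:
  fixes B :: "nat set" and a cb :: "nat \<Rightarrow> complex"
  assumes fin: "finite B"
  shows "\<exists>n d. n \<noteq> 0 \<and> d \<noteq> 0 \<and>
    (\<forall>s. poly d s \<noteq> 0 \<longrightarrow> 1 + (\<Sum>l\<in>B. cb l / (a l - s)) = poly n s / poly d s)"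
proof -
  define d where "d = (\<Prod>l\<in>B. [:a l, -1:])"
  define n where "n = d + (\<Sum>l\<in>B. smult (cb l) (\<Prod>l'\<in>B-{l}. [:a l', -1:]))"
  have pd: "poly d s = (\<Prod>l\<in>B. a l - s)" for s
    unfolding d_def by (simp add: poly_prod)
  have pn: "poly n s = poly d s + (\<Sum>l\<in>B. cb l * (\<Prod>l'\<in>B-{l}. a l' - s))" for s
    unfolding n_def by (simp add: poly_prod poly_sum)
  have eq: "1 + (\<Sum>l\<in>B. cb l / (a l - s)) = poly n s / poly d s" if ds: "poly d s \<noteq> 0" for s
  proof -
    have nz: "\<forall>l\<in>B. a l - s \<noteq> 0" using ds fin by (simp add: pd)
    have "cb l / (a l - s) = cb l * (\<Prod>l'\<in>B-{l}. a l' - s) / poly d s" if "l \<in> B" for l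
    proof -
      have e: "poly d s = (a l - s) * (\<Prod>l'\<in>B-{l}. a l' - s)"
        unfolding pd using fin that by (simp add: prod.remove)
      then have P0: "(\<Prod>l'\<in>B-{l}. a l' - s) \<noteq> 0" using ds by auto
      show ?thesis unfolding e using P0
        by (simp add: nonzero_mult_divide_mult_cancel_right)
    qed
    then have "(\<Sum>l\<in>B. cb l / (a l - s)) = (\<Sum>l\<in>B. cb l * (\<Prod>l'\<in>B-{l}. a l' - s)) / poly d s"
      by (simp add: sum_divide_distrib)
    then show ?thesis using ds by (simp add: pn field_simps)
  qed
  have lim: "((\<lambda>s. 1 + (\<Sum>l\<in>B. cb l / (a l - s))) \<longlongrightarrow> 1) at_infinity"
  proof -
    have "((\<lambda>s. cb l / (a l - s)) \<longlongrightarrow> 0) at_infinity" for l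
      by (rule tendsto_divide_0[OF tendsto_const filterlim_const_minus_at_infinity])
    then have "((\<lambda>s. \<Sum>l\<in>B. cb l / (a l - s)) \<longlongrightarrow> 0) at_infinity"
      by (intro tendsto_null_sum) auto
    then show ?thesis using tendsto_add[OF tendsto_const, of _ 0 _ 1] by simp
  qed
  have ev: "eventually (\<lambda>s. poly d s \<noteq> 0) at_infinity"
  proof -
    have "eventually (\<lambda>s. \<forall>l\<in>B. s \<noteq> a l) at_infinity"
      using fin by (intro eventually_ball_finite) (auto simp: eventually_not_equal_at_infinity)
    then show ?thesis by eventually_elim (use fin in \<open>auto simp: pd\<close>)
  qed
  have d0: "d \<noteq> 0"
    unfolding d_def using fin by (simp add: prod_zero_iff)
  have n0: "n \<noteq> 0"
  proof
    assume "n = 0"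
    have "eventually (\<lambda>s. 1 + (\<Sum>l\<in>B. cb l / (a l - s)) = 0) at_infinity"
      using ev by eventually_elim (simp add: eq \<open>n = 0\<close>)
    then have "((\<lambda>s. 1 + (\<Sum>l\<in>B. cb l / (a l - s))) \<longlongrightarrow> 0) at_infinity"
      by (simp add: tendsto_eventually)
    with lim have "(1::complex) = 0"
      using tendsto_unique[OF trivial_limit_at_infinity] by blast
    then show False by simp
  qed
  show ?thesis using n0 d0 eq by blast
qed

theorem theorem1:
  fixes p m k :: nat
    and Q P :: "nat \<Rightarrow> nat \<Rightarrow> complex \<Rightarrow> complex"
    and N :: "nat \<Rightarrow> nat \<Rightarrow> complex \<Rightarrow> complex"
    and a b c :: "nat \<Rightarrow> complex"
    and blk :: "nat \<Rightarrow> nat"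
    and lam :: complex
    and v :: "nat \<Rightarrow> complex"
  assumes dsf: "dyn_struct_fun p m Q P"
    and simple: "only_simple_poles p (p + m) (IQP p Q P)"
    and no_common: "\<forall>z. is_tm_zero p (p + m) (IQP p Q P) z \<longrightarrow> \<not> is_tm_pole p (p + m) (IQP p Q P) z"
    and blk_range: "\<forall>l<k. blk l < p"
    and min_b: "\<forall>l<k. b l \<noteq> 0"
    and min_c: "\<forall>l<k. c l \<noteq> 0"
    and min_a: "\<forall>l<k. \<forall>l'<k. l \<noteq> l' \<and> blk l = blk l' \<longrightarrow> a l \<noteq> a l'"
    and N_diag: "\<forall>j<p. N j j = (\<lambda>s. 1 + (\<Sum>l\<in>{l. l < k \<and> blk l = j}. c l * b l / (a l - s)))"
    and N_off: "\<forall>i<p. \<forall>j<p. i \<noteq> j \<longrightarrow> N i j = (\<lambda>s. 0)"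
    and v_nz: "\<exists>j<p. v j \<noteq> 0"
    and zero_dir: "\<forall>col<p + m. ((\<lambda>s. \<Sum>i<p. v i * IQP p Q P i col s) \<longlongrightarrow> 0) (at lam)"
    and cancelled: "\<not> is_tm_zero p (p + m) (tmat_mult p N (IQP p Q P)) lam"
  shows "\<forall>j<p. bool_pattern v j \<longrightarrow> is_pole (N j j) lam"
proof (intro allI impI, rule ccontr)
  fix j assume jp: "j < p" and vj: "bool_pattern v j" and np: "\<not> is_pole (N j j) lam"
  define H where "H = IQP p Q P"
  have "\<forall>i. \<exists>nn dd. i < p \<longrightarrow> nn \<noteq> 0 \<and> dd \<noteq> 0 \<and>
      (\<forall>s. poly dd s \<noteq> 0 \<longrightarrow> N i i s = poly nn s / poly dd s)"
  proof (intro allI impI)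
    fix i
    show "\<exists>nn dd. i < p \<longrightarrow> nn \<noteq> 0 \<and> dd \<noteq> 0 \<and>
      (\<forall>s. poly dd s \<noteq> 0 \<longrightarrow> N i i s = poly nn s / poly dd s)"
    proof (cases "i < p")
      case True
      obtain nn dd where "nn \<noteq> 0" "dd \<noteq> 0"
        "\<forall>s. poly dd s \<noteq> 0 \<longrightarrow> 1 + (\<Sum>l\<in>{l. l < k \<and> blk l = i}. c l * b l / (a l - s)) = poly nn s / poly dd s"
        using N_rat[of "{l. l < k \<and> blk l = i}" "\<lambda>l. c l * b l" a] by auto
      then show ?thesis using N_diag True by auto
    qed auto
  qed
  then obtain nn dd where rep: "\<And>i. i < p \<Longrightarrow> nn i \<noteq> 0 \<and> dd i \<noteq> 0 \<and>
      (\<forall>s. poly (dd i) s \<noteq> 0 \<longrightarrow> N i i s = poly (nn i) s / poly (dd i) s)"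
    by metis
  define o1 where "o1 i = order lam (nn i)" for i
  define e where "e i = order lam (dd i)" for i
  have "\<forall>i. \<exists>q r. i < p \<longrightarrow> poly q lam \<noteq> 0 \<and> poly r lam \<noteq> 0 \<and>
      (\<forall>s. poly (nn i) s = (s - lam) ^ o1 i * poly q s) \<and>
      (\<forall>s. poly (dd i) s = (s - lam) ^ e i * poly r s)"
    using decomp rep unfolding o1_def e_def by metis
  then obtain q r where qr: "\<And>i. i < p \<Longrightarrow> poly (q i) lam \<noteq> 0 \<and> poly (r i) lam \<noteq> 0 \<and>
      (\<forall>s. poly (nn i) s = (s - lam) ^ o1 i * poly (q i) s) \<and>
      (\<forall>s. poly (dd i) s = (s - lam) ^ e i * poly (r i) s)"
    by metis
  have evq: "eventually (\<lambda>s. poly (q i) s \<noteq> 0 \<and> poly (r i) s \<noteq> 0 \<and> s \<noteq> lam) (at lam)"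
    if ip: "i < p" for i
  proof -
    have "((\<lambda>s. poly (q i) s) \<longlongrightarrow> poly (q i) lam) (at lam)"
      "((\<lambda>s. poly (r i) s) \<longlongrightarrow> poly (r i) lam) (at lam)"
      by (intro tendsto_intros)+
    then have "eventually (\<lambda>s. poly (q i) s \<noteq> 0) (at lam)" "eventually (\<lambda>s. poly (r i) s \<noteq> 0) (at lam)"
      using qr[OF ip] tendsto_imp_eventually_ne by blast+
    moreover have "eventually (\<lambda>s. s \<noteq> lam) (at lam)" by (simp add: eventually_at_filter)
    ultimately show ?thesis by eventually_elim auto
  qed
  have evN: "eventually (\<lambda>s. N i i s = (s - lam) ^ o1 i * poly (q i) s / ((s - lam) ^ e i * poly (r i) s)
      \<and> poly (q i) s \<noteq> 0 \<and> poly (r i) s \<noteq> 0 \<and> s \<noteq> lam) (at lam)"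
    if ip: "i < p" for i
    using evq[OF ip]
  proof eventually_elim
    case (elim s)
    then have "poly (dd i) s \<noteq> 0" using qr[OF ip] by simp
    then show ?case using rep[OF ip] qr[OF ip] elim by simp
  qed
  have ej: "e j \<le> o1 j"
  proof (rule ccontr)
    assume "\<not> e j \<le> o1 j"
    moreover have "eventually (\<lambda>s. N j j s = (s - lam) ^ o1 j * poly (q j) s / ((s - lam) ^ e j * poly (r j) s)) (at lam)"
      using evN[OF jp] by (rule eventually_mono) auto
    ultimately have "is_pole (N j j) lam"
      using pole_from_orders[of "N j j" lam "o1 j" "q j" "e j" "r j"] qr[OF jp] by auto
    with np show False by simp
  qed
  define S where "S = {i. i < p \<and> v i \<noteq> 0}"
  define g where "g i = int (o1 i) - int (e i)" for i
  have finS: "finite S" unfolding S_def by simp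
  have jS: "j \<in> S" using jp vj unfolding S_def bool_pattern_def by simp
  define M where "M = Max (g ` S)"
  have MS: "M \<in> g ` S" unfolding M_def using finS jS by (intro Max_in) auto
  then obtain i0 where i0S: "i0 \<in> S" and gi0: "g i0 = M" by auto
  have gle: "g i \<le> M" if "i \<in> S" for i unfolding M_def using finS that by (intro Max_ge) auto
  have M0: "M \<ge> 0" using gle[OF jS] ej unfolding g_def by simp
  define R where "R = nat M"
  define t where "t i = nat (M - g i)" for i
  have tR: "t i + o1 i = R + e i" if "i \<in> S" for i
    using gle[OF that] M0 unfolding t_def R_def g_def by simp
  have t0: "t i0 = 0" unfolding t_def using gi0 by simp
  define w where "w i s = (if i < p \<and> v i \<noteq> 0 then v i * (s - lam) ^ t i * poly (r i) s / poly (q i) s else 0)"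
    for i s
  have "is_tm_zero p (p + m) (tmat_mult p N H) lam"
    unfolding is_tm_zero_def
  proof (intro exI[of _ w] conjI ballI allI impI)
    fix i assume ip: "i < p"
    show "rat_fun (w i)"
    proof (cases "v i \<noteq> 0")
      case True
      have "q i \<noteq> 0" using qr[OF ip] by auto
      then show ?thesis unfolding rat_fun_def
        by (intro exI[of _ "smult (v i) ([:-lam, 1:] ^ t i * r i)"] exI[of _ "q i"])
          (simp add: w_def ip True poly_power)
    next
      case False
      then show ?thesis unfolding rat_fun_def
        by (intro exI[of _ 0] exI[of _ 1]) (simp add: w_def)
    qed
    show "\<exists>c. (w i \<longlongrightarrow> c) (at lam)"
    proof (cases "v i \<noteq> 0")
      case True
      have "((\<lambda>s. v i * (s - lam) ^ t i * poly (r i) s / poly (q i) s) \<longlongrightarrow>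
          v i * (lam - lam) ^ t i * poly (r i) lam / poly (q i) lam) (at lam)"
        using qr[OF ip] by (intro tendsto_intros) auto
      then show ?thesis unfolding w_def using ip True by auto
    next
      case False
      then show ?thesis unfolding w_def by auto
    qed
  next
    show "\<exists>i<p. \<not> (w i \<longlongrightarrow> 0) (at lam)"
    proof (intro exI[of _ i0] conjI)
      show ip: "i0 < p" using i0S unfolding S_def by simp
      have vi: "v i0 \<noteq> 0" using i0S unfolding S_def by simp
      have "((\<lambda>s. v i0 * (s - lam) ^ t i0 * poly (r i0) s / poly (q i0) s) \<longlongrightarrow>
          v i0 * (lam - lam) ^ t i0 * poly (r i0) lam / poly (q i0) lam) (at lam)"
        using qr[OF ip] by (intro tendsto_intros) auto
      then have lim: "(w i0 \<longlongrightarrow> v i0 * poly (r i0) lam / poly (q i0) lam) (at lam)"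
        unfolding w_def using ip vi t0 by (simp add: w_def)
      have nz: "v i0 * poly (r i0) lam / poly (q i0) lam \<noteq> 0" using vi qr[OF ip] by simp
      show "\<not> (w i0 \<longlongrightarrow> 0) (at lam)"
        using tendsto_unique[OF trivial_limit_at lim] nz by blast
    qed
  next
    fix col assume colp: "col < p + m"
    have evi: "eventually (\<lambda>s. \<forall>i\<in>{..<p}. w i s * tmat_mult p N H i col s = (s - lam) ^ R * (v i * H i col s)) (at lam)"
    proof (intro eventually_ball_finite ballI)
      show "finite {..<p}" by simp
      fix i assume "i \<in> {..<p}"
      then have ip: "i < p" by simp
      have tm: "tmat_mult p N H i col s = N i i s * H i col s" for s
      proof -
        have "tmat_mult p N H i col s = (\<Sum>l<p. if l = i then N i i s * H i col s else 0)"
          unfolding tmat_mult_def using N_off ip by (intro sum.cong) auto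
        then show ?thesis using ip by simp
      qed
      show "eventually (\<lambda>s. w i s * tmat_mult p N H i col s = (s - lam) ^ R * (v i * H i col s)) (at lam)"
      proof (cases "v i \<noteq> 0")
        case False
        then show ?thesis by (simp add: w_def)
      next
        case True
        then have iS: "i \<in> S" using ip unfolding S_def by simp
        show ?thesis using evN[OF ip]
        proof eventually_elim
          case (elim s)
          have pw: "(s - lam) ^ t i * (s - lam) ^ o1 i = (s - lam) ^ R * (s - lam) ^ e i"
            using tR[OF iS] by (metis power_add)
          have ne: "(s - lam) ^ e i \<noteq> 0" using elim by simp
          have "w i s * N i i s = v i * ((s - lam) ^ t i * (s - lam) ^ o1 i) * (poly (r i) s * poly (q i) s)
              / (poly (q i) s * ((s - lam) ^ e i * poly (r i) s))"
            using elim True ip by (simp add: w_def)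
          also have "\<dots> = v i * (s - lam) ^ R"
            unfolding pw using elim ne by (simp add: field_simps)
          finally show ?case unfolding tm by (simp add: algebra_simps)
        qed
      qed
    qed
    have "eventually (\<lambda>s. (\<Sum>i<p. w i s * tmat_mult p N H i col s) = (s - lam) ^ R * (\<Sum>i<p. v i * H i col s)) (at lam)"
      using evi by eventually_elim (simp add: sum_distrib_left)
    moreover have "((\<lambda>s. (s - lam) ^ R * (\<Sum>i<p. v i * H i col s)) \<longlongrightarrow> (lam - lam) ^ R * 0) (at lam)"
      using zero_dir colp unfolding H_def by (intro tendsto_intros) auto
    ultimately show "((\<lambda>s. \<Sum>i<p. w i s * tmat_mult p N H i col s) \<longlongrightarrow> 0) (at lam)"
      by (simp add: tendsto_cong)
  qed
  with cancelled show False unfolding H_def by simp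
qed


end
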